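(* Let $m\ge n\ge p\ge 1$, let $A$ be an $m\times n$ real matrix and $N=\operatorname{diag}(\mu_1,\dots,\mu_p)$ with $\mu_1>\dots>\mu_p>0$. On $M=\mathrm{St}(p,m)\times\mathrm{St}(p,n)$ with metric $\langle(\xi_1,\eta_1),(\xi_2,\eta_2)\rangle_{(U,V)}=\operatorname{tr}(\xi_1^T\xi_2)+\operatorname{tr}(\eta_1^T\eta_2)$ and retraction $R_{(U,V)}(\xi,\eta)=(\mathrm{qf}(U+\xi),\mathrm{qf}(V+\eta))$, let $F(U,V)=\operatorname{tr}(U^TAVN)$. Then there exists $L>0$ such that \[ \bigl|\mathrm{D}(F\circ R_{(U,V)})(t\zeta)[\zeta]-\mathrm{D}(F\circ R_{(U,V)})(0)[\zeta]\bigr|\le Lt \] for all $(U,V)\in M$, $\zeta=(\xi,\eta)\in T_{(U,V)}M$ with $\|\zeta\|_{(U,V)}=1$, and $t\ge 0$.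
   Context: $\mathrm{St}(p,n)=\{X\in\mathbb{R}^{n\times p}: X^TX=I_p\}$; for a full-rank $B$, $\mathrm{qf}(B)$ denotes the $Q$-factor of the unique decomposition $B=QR'$ with $Q$ having orthonormal columns and $R'$ upper triangular with positive diagonal. *)

theory Defs
  imports "HOL-Analysis.Analysis"
begin

definition stiefel :: "(real^('p::finite)^('m::finite)) set" where
  "stiefel = {X. transpose X ** X = mat 1}"

definition stiefel_tangent :: "real^('p::finite)^('m::finite) \<Rightarrow> (real^('p::finite)^('m::finite)) set" where
  "stiefel_tangent U = {\<xi>. transpose U ** \<xi> + transpose \<xi> ** U = 0}"

definition upper_tri :: "real^('p::{finite,wellorder})^('p::{finite,wellorder}) \<Rightarrow> bool" where
  "upper_tri R \<longleftrightarrow> (\<forall>i j. j < i \<longrightarrow> R$i$j = 0)"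

definition qf :: "real^('p::{finite,wellorder})^('m::finite) \<Rightarrow> real^('p::{finite,wellorder})^('m::finite)" where
  "qf B = (THE Q. transpose Q ** Q = mat 1 \<and>
              (\<exists>R. upper_tri R \<and> (\<forall>i. R$i$i > 0) \<and> B = Q ** R))"

definition diagm :: "(('p::finite) \<Rightarrow> real) \<Rightarrow> real^('p::finite)^('p::finite)" where
  "diagm \<mu> = (\<chi> i j. if i = j then \<mu> i else 0)"

definition prod_metric ::
  "real^('p::finite)^('m::finite) \<Rightarrow> real^('p::finite)^('n::finite) \<Rightarrow> real^('p::finite)^('m::finite) \<Rightarrow> real^('p::finite)^('n::finite) \<Rightarrow> real" where
  "prod_metric \<xi>1 \<eta>1 \<xi>2 \<eta>2 = trace (transpose \<xi>1 ** \<xi>2) + trace (transpose \<eta>1 ** \<eta>2)"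

definition costF ::
  "real^('n::finite)^('m::finite) \<Rightarrow> real^('p::finite)^('p::finite) \<Rightarrow> real^('p::finite)^('m::finite) \<Rightarrow> real^('p::finite)^('n::finite) \<Rightarrow> real" where
  "costF A N U V = trace (transpose U ** A ** V ** N)"

definition pullback_ray ::
  "real^('n::finite)^('m::finite) \<Rightarrow> real^('p::{finite,wellorder})^('p::{finite,wellorder}) \<Rightarrow> real^('p::{finite,wellorder})^('m::finite) \<Rightarrow> real^('p::{finite,wellorder})^('n::finite)
     \<Rightarrow> real^('p::{finite,wellorder})^('m::finite) \<Rightarrow> real^('p::{finite,wellorder})^('n::finite) \<Rightarrow> real \<Rightarrow> real" where
  "pullback_ray A N U V \<xi> \<eta> s = costF A N (qf (U + s *\<^sub>R \<xi>)) (qf (V + s *\<^sub>R \<eta>))"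

end

theory Submission
  imports Defs
begin

lemma mm_entry: "(A ** B)$i$j = (\<Sum>k\<in>UNIV. A$i$k * B$k$j)"
  by (simp add: matrix_matrix_mult_def)

lemma tr_entry: "transpose A $i$j = A$j$i"
  by (simp add: transpose_def)

lemma matrix_add_rdistrib': "((B + C) ** A) = (B ** A) + (C ** A)"
  by (simp add: vec_eq_iff mm_entry distrib_right sum.distrib)

lemma mm_bilinear: "bilinear ((**) :: real^'n^'m \<Rightarrow> real^'k^'n \<Rightarrow> real^'k^'m)"
  unfolding bilinear_def
  by (auto intro!: linearI simp: matrix_add_ldistrib matrix_add_rdistrib' matrix_scalar_ac scalar_matrix_assoc)

lemma mm_bb: "bounded_bilinear ((**) :: real^'n^'m \<Rightarrow> real^'k^'n \<Rightarrow> real^'k^'m)"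
  using mm_bilinear bilinear_conv_bounded_bilinear by blast

lemma transpose_bl: "bounded_linear (transpose :: real^'n^'m \<Rightarrow> real^'m^'n)"
  by (rule linear_conv_bounded_linear[THEN iffD1]) (auto intro!: linearI simp: transpose_def vec_eq_iff)

lemma trace_bl: "bounded_linear (trace :: real^'n^'n \<Rightarrow> real)"
  by (rule linear_conv_bounded_linear[THEN iffD1]) (auto intro!: linearI simp: trace_def sum.distrib sum_distrib_left)

lemma inner_mat: "(X::real^'n^'m) \<bullet> Y = trace (transpose X ** Y)"
  by (simp add: inner_vec_def trace_def mm_entry tr_entry)
     (subst sum.swap, simp)

lemma norm_sq_trace: "norm (X::real^'n^'m) ^ 2 = trace (transpose X ** X)"
  by (simp add: power2_norm_eq_inner inner_mat)

lemma sum_single: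
  fixes f :: "'a::finite \<Rightarrow> 'b::comm_monoid_add"
  assumes "\<And>k. k \<noteq> i \<Longrightarrow> f k = 0"
  shows "(\<Sum>k\<in>UNIV. f k) = f i"
  using assms by (subst sum.remove[of UNIV i]) (auto intro!: sum.neutral)

lemma ut_mult_entry0:
  assumes "upper_tri R" "upper_tri S" "j < i"
  shows "(R ** S)$i$j = 0"
proof -
  have h: "\<And>k. R$i$k * S$k$j = 0"
  proof -
    fix k show "R$i$k * S$k$j = 0"
    proof (cases "k < i")
      case True then show ?thesis using assms(1) unfolding upper_tri_def by simp
    next
      case False then have "j < k" using assms(3) by auto
      then show ?thesis using assms(2) unfolding upper_tri_def by simp
    qed
  qed
  show ?thesis unfolding mm_entry by (rule sum.neutral) (use h in auto)
qed

lemma ut_mult: "upper_tri R \<Longrightarrow> upper_tri S \<Longrightarrow> upper_tri (R ** S)"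
  using ut_mult_entry0 unfolding upper_tri_def[of "R ** S"] by blast

lemma ut_mult_diag:
  assumes "upper_tri R" "upper_tri S"
  shows "(R ** S)$i$i = R$i$i * S$i$i"
proof -
  have "(R ** S)$i$i = (\<Sum>k\<in>UNIV. R$i$k * S$k$i)" by (simp add: mm_entry)
  also have "\<dots> = R$i$i * S$i$i"
  proof (rule sum_single)
    fix k assume "k \<noteq> i"
    then have "k < i \<or> i < k" by auto
    then show "R$i$k * S$k$i = 0" using assms unfolding upper_tri_def by auto
  qed
  finally show ?thesis .
qed

lemma ut_det: fixes R :: "real^('p::{finite,wellorder})^('p::{finite,wellorder})" shows "upper_tri R \<Longrightarrow> det R = (\<Prod>i\<in>UNIV. R$i$i)"
  by (rule det_upperdiagonal) (auto simp: upper_tri_def)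

lemma ut_inv:
  fixes R :: "real^('p::{finite,wellorder})^('p::{finite,wellorder})"
  assumes ut: "upper_tri R" and nz: "\<And>i. R$i$i \<noteq> 0"
  shows "\<exists>R'. R ** R' = mat 1 \<and> R' ** R = mat 1 \<and> upper_tri R' \<and> (\<forall>i. R'$i$i = 1 / R$i$i)"
proof -
  have "det R \<noteq> 0" using ut_det[OF ut] nz by simp
  then have "invertible R" by (simp add: invertible_det_nz)
  then obtain R' where R1: "R ** R' = mat 1" and R2: "R' ** R = mat 1"
    unfolding invertible_def by blast
  have up: "\<forall>i. j < i \<longrightarrow> R'$i$j = 0" for j
  proof (induction j rule: less_induct)
    case (less j)
    show ?case
    proof (intro allI impI)
      fix i assume ji: "j < i"
      have "0 = (R' ** R)$i$j" using R2 ji by (simp add: mat_def)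
      also have "\<dots> = (\<Sum>k\<in>UNIV. R'$i$k * R$k$j)" by (simp add: mm_entry)
      also have "\<dots> = R'$i$j * R$j$j"
      proof (rule sum_single)
        fix k assume "k \<noteq> j"
        then have "k < j \<or> j < k" by auto
        then show "R'$i$k * R$k$j = 0"
        proof
          assume "k < j" then have "R'$i$k = 0" using less ji by auto
          then show ?thesis by simp
        next
          assume "j < k" then show ?thesis using ut unfolding upper_tri_def by simp
        qed
      qed
      finally show "R'$i$j = 0" using nz[of j] by simp
    qed
  qed
  then have utR': "upper_tri R'" unfolding upper_tri_def by blast
  have "R'$i$i * R$i$i = 1" for i
    using ut_mult_diag[OF utR' ut, of i] R2 by (simp add: mat_def)
  then have "R'$i$i = 1 / R$i$i" for i using nz[of i] by (simp add: field_simps)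
  then show ?thesis using R1 R2 utR' by blast
qed

lemma ut_orth:
  fixes M :: "real^('p::{finite,wellorder})^('p::{finite,wellorder})"
  assumes ut: "upper_tri M" and pos: "\<And>i. M$i$i > 0" and orth: "transpose M ** M = mat 1"
  shows "M = mat 1"
proof -
  have col: "\<forall>k. M$k$j = (if k = j then 1 else 0)" for j
  proof (induction j rule: less_induct)
    case (less j)
    have off: "M$k$j = 0" if "k < j" for k
    proof -
      have "0 = (transpose M ** M)$k$j" using orth that by (simp add: mat_def)
      also have "\<dots> = (\<Sum>l\<in>UNIV. M$l$k * M$l$j)" by (simp add: mm_entry tr_entry)
      also have "\<dots> = M$k$k * M$k$j"
        by (rule sum_single) (use less that in auto)
      also have "\<dots> = M$k$j" using less that by auto
      finally show ?thesis by simp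
    qed
    have "1 = (transpose M ** M)$j$j" using orth by (simp add: mat_def)
    also have "\<dots> = (\<Sum>l\<in>UNIV. M$l$j * M$l$j)" by (simp add: mm_entry tr_entry)
    also have "\<dots> = M$j$j * M$j$j"
    proof (rule sum_single)
      fix l assume "l \<noteq> j"
      then have "l < j \<or> j < l" by auto
      then show "M$l$j * M$l$j = 0" using off ut unfolding upper_tri_def by auto
    qed
    finally have sq: "M$j$j * M$j$j = 1" by simp
    have "(M$j$j - 1) * (M$j$j + 1) = 0" using sq by (simp add: algebra_simps)
    then have "M$j$j = 1" using pos[of j] by auto
    then show ?case using off ut unfolding upper_tri_def
      by (metis linorder_neqE)
  qed
  show ?thesis using col by (simp add: vec_eq_iff mat_def)
qed

lemma qr_unique:
  fixes Q1 Q2 :: "real^('p::{finite,wellorder})^('m::finite)"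
  assumes o1: "transpose Q1 ** Q1 = mat 1" and o2: "transpose Q2 ** Q2 = mat 1"
    and u1: "upper_tri R1" "\<And>i. R1$i$i > 0" and u2: "upper_tri R2" "\<And>i. R2$i$i > 0"
    and eq: "Q1 ** R1 = Q2 ** R2"
  shows "Q1 = Q2"
proof -
  obtain R' where r1: "R1 ** R' = mat 1" and r2: "R' ** R1 = mat 1" and ur: "upper_tri R'"
    and dr: "\<forall>i. R'$i$i = 1 / R1$i$i"
    using ut_inv[OF u1(1)] u1(2) by (metis less_irrefl)
  define M where "M = R2 ** R'"
  have uM: "upper_tri M" unfolding M_def by (rule ut_mult[OF u2(1) ur])
  have pM: "M$i$i > 0" for i unfolding M_def using ut_mult_diag[OF u2(1) ur] dr u1(2) u2(2) by simp
  have q1: "Q1 = Q2 ** M"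
    by (metis M_def eq matrix_mul_assoc matrix_mul_rid r1)
  have "transpose M ** M = transpose M ** (transpose Q2 ** Q2) ** M" using o2 by simp
  also have "\<dots> = transpose (Q2 ** M) ** (Q2 ** M)"
    by (simp add: matrix_transpose_mul matrix_mul_assoc)
  also have "\<dots> = mat 1" using q1 o1 by simp
  finally have "M = mat 1" using ut_orth[OF uM pM] by blast
  then show ?thesis using q1 by simp
qed

lemma qf_eq:
  fixes Q :: "real^('p::{finite,wellorder})^('m::finite)"
  assumes o: "transpose Q ** Q = mat 1" and u: "upper_tri R" "\<And>i. R$i$i > 0" and B: "B = Q ** R"
  shows "qf B = Q"
  unfolding qf_def
proof (rule the_equality)
  show "transpose Q ** Q = mat 1 \<and> (\<exists>R. upper_tri R \<and> (\<forall>i. 0 < R $ i $ i) \<and> B = Q ** R)"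
    using assms by blast
next
  fix Q' assume "transpose Q' ** Q' = mat 1 \<and> (\<exists>R. upper_tri R \<and> (\<forall>i. 0 < R $ i $ i) \<and> B = Q' ** R)"
  then show "Q' = Q" using qr_unique[of Q' Q] assms by metis
qed

lemma column_mm: "column i (B ** T) = B *v column i T"
  by (simp add: vec_eq_iff column_def matrix_vector_mult_def mm_entry)

lemma gram_entry: "(transpose X ** X)$i$l = column i X \<bullet> column l X"
  by (simp add: matrix_mult_transpose_dot_column)

definition good :: "real^('p::{finite,wellorder})^('m::finite) \<Rightarrow> ('p::{finite,wellorder}) set \<Rightarrow> real^('p::{finite,wellorder})^('p::{finite,wellorder}) \<Rightarrow> bool" where
  "good B S T \<longleftrightarrow> upper_tri T \<and> (\<forall>i. T$i$i > 0) \<and> (\<forall>i. i \<notin> S \<longrightarrow> (\<forall>k. T$k$i = (if k = i then 1 else 0)))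
     \<and> (\<forall>i\<in>S. \<forall>l\<in>S. (B *v column i T) \<bullet> (B *v column l T) = (if i = l then 1 else 0))"

lemma good_extend:
  fixes B :: "real^('p::{finite,wellorder})^('m::finite)"
  assumes inj: "\<And>x. B *v x = 0 \<Longrightarrow> x = 0"
    and g: "good B {k. k < j} T"
  shows "\<exists>T'. good B {k. k \<le> j} T'"
proof -
  let ?S = "{k. k < j}"
  define q where "q i = B *v column i T" for i
  define c where "c i = (B *v axis j 1) \<bullet> q i" for i
  define v where "v = axis j (1::real) - (\<Sum>i\<in>?S. c i *\<^sub>R column i T)"
  define w where "w = B *v v"
  define n where "n = norm w"
  define T' where "T' = (\<chi> k l. if l = j then (v /\<^sub>R n)$k else T$k$l)"
  have ut: "upper_tri T" and dpos: "\<And>i. T$i$i > 0"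
    and outside: "\<And>i k. \<not> i < j \<Longrightarrow> T$k$i = (if k = i then 1 else 0)"
    and orth: "\<And>i l. i < j \<Longrightarrow> l < j \<Longrightarrow> q i \<bullet> q l = (if i = l then 1 else 0)"
    using g unfolding good_def q_def by auto
  have vj: "v$j = 1"
  proof -
    have "(\<Sum>i\<in>?S. c i *\<^sub>R column i T)$j = 0"
      using ut by (auto simp: upper_tri_def column_def intro!: sum.neutral)
    then show ?thesis by (simp add: v_def)
  qed
  have vk: "v$k = 0" if "j < k" for k
  proof -
    have "(\<Sum>i\<in>?S. c i *\<^sub>R column i T)$k = 0"
      using ut that by (auto simp: upper_tri_def column_def intro!: sum.neutral)
    then show ?thesis using that by (simp add: v_def axis_def)
  qed
  have "v \<noteq> 0" using vj by auto
  then have "w \<noteq> 0" using inj unfolding w_def by blast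
  then have npos: "n > 0" unfolding n_def by simp
  have wexp: "w = B *v axis j 1 - (\<Sum>i\<in>?S. c i *\<^sub>R q i)"
    unfolding w_def v_def q_def
    by (simp add: matrix_vector_mult_diff_distrib matrix_vector_mult_scaleR linear_sum[OF matrix_vector_mul_linear] o_def)
  have wq: "w \<bullet> q l = 0" if "l < j" for l
  proof -
    have "(\<Sum>i\<in>?S. c i *\<^sub>R q i) \<bullet> q l = (\<Sum>i\<in>?S. c i * (q i \<bullet> q l))"
      by (simp add: inner_sum_left)
    also have "\<dots> = (\<Sum>i\<in>?S. if i = l then c l else 0)"
      by (rule sum.cong) (use orth that in auto)
    also have "\<dots> = c l" using that by simp
    finally show ?thesis unfolding wexp by (simp add: inner_diff_left c_def)
  qed
  have colT': "column i T' = (if i = j then v /\<^sub>R n else column i T)" for i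
    by (simp add: T'_def column_def vec_eq_iff)
  have qj: "B *v column j T' = w /\<^sub>R n"
    by (simp add: colT' w_def matrix_vector_mult_scaleR)
  have "good B {k. k \<le> j} T'"
    unfolding good_def
  proof (intro conjI allI impI ballI)
    show "upper_tri T'"
      using ut vk unfolding upper_tri_def T'_def by auto
    fix i
    show "T'$i$i > 0" using dpos npos vj by (simp add: T'_def)
  next
    fix i k assume "i \<notin> {k. k \<le> j}"
    then show "T'$k$i = (if k = i then 1 else 0)" using outside[of i k] by (auto simp: T'_def)
  next
    fix i l assume i: "i \<in> {k. k \<le> j}" and l: "l \<in> {k. k \<le> j}"
    have ww: "(w /\<^sub>R n) \<bullet> (w /\<^sub>R n) = 1"
      using npos by (simp add: n_def power2_norm_eq_inner[symmetric] power2_eq_square)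
    show "(B *v column i T') \<bullet> (B *v column l T') = (if i = l then 1 else 0)"
    proof (cases "i = j")
      case True
      show ?thesis
      proof (cases "l = j")
        case True with \<open>i = j\<close> show ?thesis using qj ww by simp
      next
        case False
        then have "l < j" using l by auto
        then show ?thesis using \<open>i = j\<close> qj wq[of l] False by (simp add: colT' q_def)
      qed
    next
      case False
      then have ij: "i < j" using i by auto
      show ?thesis
      proof (cases "l = j")
        case True
        then show ?thesis using ij qj wq[of i] by (simp add: colT' q_def inner_commute)
      next
        case False
        then have "l < j" using l by auto
        then show ?thesis using ij orth[of i l] \<open>i \<noteq> j\<close> False by (simp add: colT' q_def)
      qed
    qed
  qed
  then show ?thesis by blast
qed

lemma good_all:
  fixes B :: "real^('p::{finite,wellorder})^('m::finite)"
  assumes inj: "\<And>x. B *v x = 0 \<Longrightarrow> x = 0"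
  shows "\<exists>T. good B {k. k \<le> j} T"
proof (induction j rule: less_induct)
  case (less j)
  have "\<exists>T. good B {k. k < j} T"
  proof (cases "\<exists>k. k < j")
    case True
    define j' where "j' = Max {k. k < j}"
    have fin: "finite {k. k < j}" by simp
    have j'j: "j' < j" using Max_in[OF fin] True unfolding j'_def by auto
    have "{k. k < j} = {k. k \<le> j'}"
      using Max_ge[OF fin] j'j unfolding j'_def[symmetric] by (auto intro: le_less_trans)
    then show ?thesis using less[OF j'j] by simp
  next
    case False
    then have "good B {k. k < j} (mat 1)"
      unfolding good_def upper_tri_def by (auto simp: mat_def)
    then show ?thesis by blast
  qed
  then show ?case using good_extend[OF inj] by blast
qed

lemma qr_exists:
  fixes B :: "real^('p::{finite,wellorder})^('m::finite)"
  assumes inj: "\<And>x. B *v x = 0 \<Longrightarrow> x = 0"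
  shows "\<exists>T. upper_tri T \<and> (\<forall>i. T$i$i > 0) \<and> transpose (B ** T) ** (B ** T) = mat 1"
proof -
  define j where "j = Max (UNIV :: 'p set)"
  have "{k. k \<le> j} = UNIV" unfolding j_def by (auto intro: Max_ge)
  then obtain T where "good B UNIV T" using good_all[OF inj, where j=j] by auto
  then show ?thesis unfolding good_def
    by (auto simp: vec_eq_iff gram_entry column_mm mat_def)
qed

lemma transpose_add: "transpose (A + B) = transpose A + transpose (B::real^'n^'m)"
  by (simp add: vec_eq_iff tr_entry)
lemma transpose_diff: "transpose (A - B) = transpose A - transpose (B::real^'n^'m)"
  by (simp add: vec_eq_iff tr_entry)
lemma transpose_uminus: "transpose (- A) = - transpose (A::real^'n^'m)"
  by (simp add: vec_eq_iff tr_entry)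
lemma mm_scaleR_left: "(c *\<^sub>R A) ** B = c *\<^sub>R (A ** (B::real^'k^'n))" for A :: "real^'n^'m"
  by (simp add: vec_eq_iff mm_entry sum_distrib_left mult.assoc)
lemma mm_scaleR_right: "A ** (c *\<^sub>R B) = c *\<^sub>R (A ** (B::real^'k^'n))" for A :: "real^'n^'m"
  by (simp add: vec_eq_iff mm_entry sum_distrib_left algebra_simps)
lemma mm_diff_left: "(A - C) ** B = A ** B - C ** (B::real^'k^'n)" for A C :: "real^'n^'m"
  by (simp add: vec_eq_iff mm_entry sum_subtractf algebra_simps)
lemma mm_diff_right: "A ** (B - C) = A ** B - A ** (C::real^'k^'n)" for A :: "real^'n^'m"
  by (simp add: vec_eq_iff mm_entry sum_subtractf algebra_simps)
lemma mm_uminus_left: "(- A) ** B = - (A ** (B::real^'k^'n))" for A :: "real^'n^'m"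
  by (simp add: vec_eq_iff mm_entry sum_negf)
lemma mm_uminus_right: "A ** (- B) = - (A ** (B::real^'k^'n))" for A :: "real^'n^'m"
  by (simp add: vec_eq_iff mm_entry sum_negf)

lemmas mm_simps = matrix_add_ldistrib matrix_add_rdistrib' mm_scaleR_left mm_scaleR_right
  mm_diff_left mm_diff_right mm_uminus_left mm_uminus_right transpose_add transpose_diff
  transpose_uminus transpose_scalar matrix_transpose_mul

lemma gram_ray:
  fixes U \<xi> :: "real^('p::finite)^('m::finite)"
  assumes U: "U \<in> stiefel" and xi: "\<xi> \<in> stiefel_tangent U"
  shows "transpose (U + s *\<^sub>R \<xi>) ** (U + s *\<^sub>R \<xi>) = mat 1 + (s^2) *\<^sub>R (transpose \<xi> ** \<xi>)"
proof -
  have u: "transpose U ** U = mat 1" and x: "transpose U ** \<xi> + transpose \<xi> ** U = 0"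
    using U xi by (auto simp: stiefel_def stiefel_tangent_def)
  have "transpose (U + s *\<^sub>R \<xi>) ** (U + s *\<^sub>R \<xi>)
        = transpose U ** U + s *\<^sub>R (transpose U ** \<xi> + transpose \<xi> ** U) + (s^2) *\<^sub>R (transpose \<xi> ** \<xi>)"
    by (simp add: mm_simps algebra_simps power2_eq_square scaleR_add_right)
  then show ?thesis using u x by simp
qed

lemma scaleR_mv: "(c *\<^sub>R A) *v x = c *\<^sub>R (A *v x)" for A :: "real^'n^'m"
  by (simp add: vec_eq_iff matrix_vector_mult_def sum_distrib_left mult.assoc)

lemma dot_mv: "(A *v x) \<bullet> (C *v y) = x \<bullet> ((transpose A ** C) *v y)" for A :: "real^'n^'m"
  by (metis dot_lmul_matrix matrix_vector_mul_assoc transpose_matrix_vector transpose_transpose)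

lemma ray_inj:
  fixes U \<xi> :: "real^('p::finite)^('m::finite)"
  assumes U: "U \<in> stiefel" and xi: "\<xi> \<in> stiefel_tangent U"
    and z: "(U + s *\<^sub>R \<xi>) *v x = 0"
  shows "x = 0"
proof -
  have "0 = ((U + s *\<^sub>R \<xi>) *v x) \<bullet> ((U + s *\<^sub>R \<xi>) *v x)" using z by simp
  also have "\<dots> = x \<bullet> x + s^2 * ((\<xi> *v x) \<bullet> (\<xi> *v x))"
    unfolding dot_mv gram_ray[OF U xi]
    by (simp add: matrix_vector_mult_add_rdistrib scaleR_mv dot_mv inner_add_right)
  finally have "x \<bullet> x = 0" by (metis add_nonneg_eq_0_iff inner_ge_zero mult_nonneg_nonneg zero_le_power2)
  then show ?thesis by simp
qed

definition Tm :: "real^('p::{finite,wellorder})^('m::finite) \<Rightarrow> real^('p::{finite,wellorder})^('m::finite) \<Rightarrow> real \<Rightarrow> real^('p::{finite,wellorder})^('p::{finite,wellorder})" where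
  "Tm U \<xi> s = (SOME T. upper_tri T \<and> (\<forall>i. T$i$i > 0) \<and> transpose ((U + s *\<^sub>R \<xi>) ** T) ** ((U + s *\<^sub>R \<xi>) ** T) = mat 1)"

lemma Tm_prop:
  fixes U \<xi> :: "real^('p::{finite,wellorder})^('m::finite)"
  assumes U: "U \<in> stiefel" and xi: "\<xi> \<in> stiefel_tangent U"
  shows "upper_tri (Tm U \<xi> s) \<and> (\<forall>i. Tm U \<xi> s$i$i > 0) \<and>
     transpose ((U + s *\<^sub>R \<xi>) ** Tm U \<xi> s) ** ((U + s *\<^sub>R \<xi>) ** Tm U \<xi> s) = mat 1"
  unfolding Tm_def by (rule someI_ex, rule qr_exists) (use ray_inj[OF U xi] in blast)

lemma trace_scaleR: "trace (c *\<^sub>R A) = c * trace (A::real^'n^'n)"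
  by (simp add: trace_def sum_distrib_left)

context
  fixes U \<xi> :: "real^('p::{finite,wellorder})^('m::finite)"
  assumes U: "U \<in> stiefel" and xi: "\<xi> \<in> stiefel_tangent U"
begin

lemma qf_ray: "qf (U + s *\<^sub>R \<xi>) = (U + s *\<^sub>R \<xi>) ** Tm U \<xi> s"
proof -
  let ?T = "Tm U \<xi> s" and ?B = "U + s *\<^sub>R \<xi>"
  have p: "upper_tri ?T" "\<And>i. ?T$i$i > 0" "transpose (?B ** ?T) ** (?B ** ?T) = mat 1"
    using Tm_prop[OF U xi, of s] by auto
  obtain R' where r1: "?T ** R' = mat 1" and ur: "upper_tri R'" and dr: "\<forall>i. R'$i$i = 1 / ?T$i$i"
    using ut_inv[OF p(1)] p(2) by (metis less_irrefl)
  have "?B = (?B ** ?T) ** R'" by (simp add: r1 flip: matrix_mul_assoc)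
  moreover have "\<And>i. R'$i$i > 0" using dr p(2) by simp
  ultimately show ?thesis using qf_eq[OF p(3) ur] by blast
qed

lemma gram_T: "transpose ((U + s *\<^sub>R \<xi>) ** X) ** ((U + s *\<^sub>R \<xi>) ** X)
   = transpose X ** X + (s^2) *\<^sub>R (transpose (\<xi> ** X) ** (\<xi> ** X))"
proof -
  have "transpose ((U + s *\<^sub>R \<xi>) ** X) ** ((U + s *\<^sub>R \<xi>) ** X)
     = transpose X ** (transpose (U + s *\<^sub>R \<xi>) ** (U + s *\<^sub>R \<xi>)) ** X"
    by (simp add: matrix_transpose_mul matrix_mul_assoc)
  also have "\<dots> = transpose X ** X + (s^2) *\<^sub>R (transpose (\<xi> ** X) ** (\<xi> ** X))"
    unfolding gram_ray[OF U xi] by (simp add: mm_simps matrix_mul_assoc)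
  finally show ?thesis .
qed

lemma Tm_norm: "norm (Tm U \<xi> s) ^ 2 + s^2 * norm (\<xi> ** Tm U \<xi> s) ^ 2 = real CARD('p)"
proof -
  have "transpose ((U + s *\<^sub>R \<xi>) ** Tm U \<xi> s) ** ((U + s *\<^sub>R \<xi>) ** Tm U \<xi> s) = mat 1"
    using Tm_prop[OF U xi, of s] by auto
  then have "trace (transpose (Tm U \<xi> s) ** Tm U \<xi> s + (s^2) *\<^sub>R (transpose (\<xi> ** Tm U \<xi> s) ** (\<xi> ** Tm U \<xi> s))) = real CARD('p)"
    by (simp add: gram_T trace_I)
  then show ?thesis
    by (simp add: norm_sq_trace trace_add trace_scaleR)
qed

lemma Tm_bound: "norm (Tm U \<xi> s) \<le> sqrt (real CARD('p))"
  using Tm_norm[of s] by (metis le_add_same_cancel1 mult_nonneg_nonneg norm_ge_zero real_le_rsqrt zero_le_power2)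

lemma Tm_unique:
  assumes ux: "upper_tri X" and dx: "\<And>i. X$i$i \<ge> 0"
    and ox: "transpose ((U + s *\<^sub>R \<xi>) ** X) ** ((U + s *\<^sub>R \<xi>) ** X) = mat 1"
  shows "X = Tm U \<xi> s"
proof -
  let ?T = "Tm U \<xi> s" and ?B = "U + s *\<^sub>R \<xi>"
  have p: "upper_tri ?T" "\<And>i. ?T$i$i > 0" "transpose (?B ** ?T) ** (?B ** ?T) = mat 1"
    using Tm_prop[OF U xi, of s] by auto
  have "transpose X ** (transpose ?B ** ?B) ** X = mat 1"
    using ox by (simp add: matrix_transpose_mul matrix_mul_assoc)
  then have "det X * det (transpose ?B ** ?B) * det X = 1"
    by (metis det_I det_mul det_transpose mult.commute)
  then have "det X \<noteq> 0" by auto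
  then have nz: "X$i$i \<noteq> 0" for i using ut_det[OF ux] by auto
  have dpos: "X$i$i > 0" for i using nz[of i] dx[of i] by linarith
  obtain RX where rx: "X ** RX = mat 1" and urx: "upper_tri RX" and drx: "\<forall>i. RX$i$i = 1 / X$i$i"
    using ut_inv[OF ux nz] by blast
  obtain RT where rt: "?T ** RT = mat 1" and urt: "upper_tri RT" and drt: "\<forall>i. RT$i$i = 1 / ?T$i$i"
    using ut_inv[OF p(1)] p(2) by (metis less_irrefl)
  have "(?B ** X) ** RX = (?B ** ?T) ** RT"
    by (simp add: rx rt flip: matrix_mul_assoc)
  then have eq: "?B ** X = ?B ** ?T"
    using qr_unique[OF ox p(3) urx _ urt] drx drt dpos p(2) by simp
  have "column i X = column i ?T" for i
  proof -
    have "?B *v (column i X - column i ?T) = 0"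
      using eq by (metis column_mm matrix_vector_mult_diff_distrib right_minus_eq)
    then have "column i X - column i ?T = 0" by (rule ray_inj[OF U xi])
    then show ?thesis by simp
  qed
  then show ?thesis by (simp add: vec_eq_iff column_def)
qed

end

lemma mm_cont[continuous_intros]:
  fixes f :: "'a::topological_space \<Rightarrow> real^'n^'m" and g :: "'a \<Rightarrow> real^'k^'n"
  shows "continuous_on S f \<Longrightarrow> continuous_on S g \<Longrightarrow> continuous_on S (\<lambda>x. f x ** g x)"
  by (rule bounded_bilinear.continuous_on[OF mm_bb])

lemma tr_cont[continuous_intros]:
  fixes f :: "'a::topological_space \<Rightarrow> real^'n^'m"
  shows "continuous_on S f \<Longrightarrow> continuous_on S (\<lambda>x. transpose (f x))"
  by (rule bounded_linear.continuous_on[OF transpose_bl])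

context
  fixes U \<xi> :: "real^('p::{finite,wellorder})^('m::finite)"
  assumes U: "U \<in> stiefel" and xi: "\<xi> \<in> stiefel_tangent U"
begin
lemma Tm_cont: "continuous_on UNIV (Tm U \<xi>)"
proof (rule continuous_from_closed_graph[of "cball 0 (sqrt (real CARD('p)))"])
  show "compact (cball (0::real^('p::{finite,wellorder})^('p::{finite,wellorder})) (sqrt (real CARD('p))))" by simp
  show "Tm U \<xi> \<in> UNIV \<rightarrow> cball 0 (sqrt (real CARD('p)))" using Tm_bound[OF U xi] by auto
  let ?Z = "{z. (\<forall>i j. j < i \<longrightarrow> snd z$i$j = 0) \<and> (\<forall>i. snd z$i$i \<ge> 0) \<and>
      transpose ((U + fst z *\<^sub>R \<xi>) ** snd z) ** ((U + fst z *\<^sub>R \<xi>) ** snd z) = mat 1}"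
  have "(\<lambda>x. (x, Tm U \<xi> x)) ` UNIV = ?Z"
  proof
    show "(\<lambda>x. (x, Tm U \<xi> x)) ` UNIV \<subseteq> ?Z"
    proof
      fix z assume "z \<in> (\<lambda>x. (x, Tm U \<xi> x)) ` UNIV"
      then obtain x where z: "z = (x, Tm U \<xi> x)" by blast
      show "z \<in> ?Z" using Tm_prop[OF U xi, of x] unfolding upper_tri_def z
        by (auto simp: less_imp_le)
    qed
    show "?Z \<subseteq> (\<lambda>x. (x, Tm U \<xi> x)) ` UNIV"
    proof
      fix z assume "z \<in> ?Z"
      then have h1: "upper_tri (snd z)" and h2: "\<And>i. snd z$i$i \<ge> 0"
        and h3: "transpose ((U + fst z *\<^sub>R \<xi>) ** snd z) ** ((U + fst z *\<^sub>R \<xi>) ** snd z) = mat 1"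
        unfolding upper_tri_def by blast+
      have "snd z = Tm U \<xi> (fst z)"
        by (rule Tm_unique[OF U xi h1 h2 h3])
      then have zz: "z = (fst z, Tm U \<xi> (fst z))" by (simp add: prod_eq_iff)
      show "z \<in> (\<lambda>x. (x, Tm U \<xi> x)) ` UNIV"
        using zz by (intro image_eqI[where x="fst z"]) auto
    qed
  qed
  moreover have "closed ?Z"
    apply (intro closed_Collect_conj closed_Collect_all closed_Collect_imp)
    subgoal for i j by (cases "j < i") auto
    subgoal by (intro closed_Collect_eq continuous_intros)
    subgoal by (intro closed_Collect_le continuous_intros)
    subgoal by (intro closed_Collect_eq continuous_intros)
    done
  ultimately show "closed ((\<lambda>x. (x, Tm U \<xi> x)) ` UNIV)" by simp
qed

end

lemma norm_mat_sq: "norm (X::real^'n^'m) ^ 2 = (\<Sum>i\<in>UNIV. \<Sum>j\<in>UNIV. (X$i$j)^2)"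
  by (simp add: norm_vec_def L2_set_def sum_nonneg power2_eq_square)

lemma norm_transpose: "norm (transpose (X::real^'n^'m)) = norm X"
proof -
  have "norm (transpose X) ^ 2 = norm X ^ 2"
    unfolding norm_mat_sq by (simp add: tr_entry) (rule sum.swap)
  then show ?thesis by (simp add: power2_eq_iff_nonneg)
qed

lemma norm_mm: "norm ((A::real^'n^'m) ** (B::real^'k^'n)) \<le> norm A * norm B"
proof -
  have e: "((A ** B)$i$j)^2 \<le> (\<Sum>k\<in>UNIV. (A$i$k)^2) * (\<Sum>k\<in>UNIV. (B$k$j)^2)" for i j
  proof -
    have "(A ** B)$i$j = (\<chi> k. A$i$k) \<bullet> (\<chi> k. B$k$j)" by (simp add: mm_entry inner_vec_def)
    then have "\<bar>(A ** B)$i$j\<bar> \<le> norm (\<chi> k. A$i$k) * norm (\<chi> k. B$k$j)"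
      by (metis Cauchy_Schwarz_ineq2)
    then have "((A ** B)$i$j)^2 \<le> (norm (\<chi> k. A$i$k) * norm (\<chi> k. B$k$j))^2"
      by (metis abs_ge_zero power2_abs power_mono)
    also have "\<dots> = norm (\<chi> k. A$i$k) ^2 * norm (\<chi> k. B$k$j)^2" by (simp add: power_mult_distrib)
    also have "\<dots> = (\<Sum>k\<in>UNIV. (A$i$k)^2) * (\<Sum>k\<in>UNIV. (B$k$j)^2)"
      by (simp add: norm_vec_def L2_set_def sum_nonneg)
    finally show ?thesis .
  qed
  have "norm (A ** B) ^ 2 \<le> (\<Sum>i\<in>UNIV. \<Sum>j\<in>UNIV. (\<Sum>k\<in>UNIV. (A$i$k)^2) * (\<Sum>k\<in>UNIV. (B$k$j)^2))"
    unfolding norm_mat_sq by (intro sum_mono e)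
  also have "\<dots> = (\<Sum>i\<in>UNIV. \<Sum>k\<in>UNIV. (A$i$k)^2) * (\<Sum>j\<in>UNIV. \<Sum>k\<in>UNIV. (B$k$j)^2)"
    by (rule sum_product[symmetric])
  also have "\<dots> = norm A ^2 * norm B ^2"
  proof -
    have "(\<Sum>j\<in>UNIV. \<Sum>k\<in>UNIV. (B$k$j)^2) = (\<Sum>k\<in>UNIV. \<Sum>j\<in>UNIV. (B$k$j)^2)" by (rule sum.swap)
    then show ?thesis unfolding norm_mat_sq by simp
  qed
  also have "\<dots> = (norm A * norm B)^2" by (simp add: power_mult_distrib)
  finally show ?thesis by (meson mult_nonneg_nonneg norm_ge_zero power2_le_imp_le)
qed

definition gam :: "real^('p::{finite,wellorder})^('p::{finite,wellorder}) \<Rightarrow> real^('p::{finite,wellorder})^('p::{finite,wellorder})" where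
  "gam X = (\<chi> i j. if i < j then X$i$j else if i = j then X$i$j / 2 else 0)"

lemma gam_bl: "bounded_linear gam"
  by (rule linear_conv_bounded_linear[THEN iffD1]) (auto intro!: linearI simp: gam_def vec_eq_iff add_divide_distrib)

lemma gam_norm: "norm (gam X) \<le> norm X"
proof -
  have "norm (gam X) ^ 2 \<le> norm X ^ 2"
    unfolding norm_mat_sq
  proof (intro sum_mono)
    fix i j show "(gam X $ i $ j)\<^sup>2 \<le> (X $ i $ j)\<^sup>2"
      by (auto simp: gam_def power_divide)
  qed
  then show ?thesis using power2_le_imp_le by fastforce
qed

lemma gam_upper: "upper_tri E \<Longrightarrow> gam (E + transpose E) = E"
  by (auto simp: gam_def vec_eq_iff tr_entry upper_tri_def)

lemma gam_ut: "upper_tri (gam X)"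
  by (auto simp: gam_def upper_tri_def)

lemmas gam_lin = bounded_linear.linear[OF gam_bl]
lemmas gam_add = linear_add[OF gam_lin]
lemmas gam_diff = linear_diff[OF gam_lin]
lemmas gam_scaleR = linear_scale[OF gam_lin]
lemmas gam_minus = linear_neg[OF gam_lin]

context
  fixes U \<xi> :: "real^('p::{finite,wellorder})^('m::finite)"
  assumes U: "U \<in> stiefel" and xi: "\<xi> \<in> stiefel_tangent U"
begin

lemma Tm_gram: "transpose (Tm U \<xi> s) ** Tm U \<xi> s + (s^2) *\<^sub>R (transpose (Tm U \<xi> s) ** (transpose \<xi> ** \<xi>) ** Tm U \<xi> s) = mat 1"
  using Tm_prop[OF U xi, of s] gram_T[OF U xi, of s "Tm U \<xi> s"]
  by (simp add: matrix_transpose_mul matrix_mul_assoc)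

lemma E_eq:
  fixes s0 s :: real and R0 :: "real^('p::{finite,wellorder})^('p::{finite,wellorder})"
  defines "T0 \<equiv> Tm U \<xi> s0" and "T \<equiv> Tm U \<xi> s"
  assumes r: "T0 ** R0 = mat 1"
  defines "E \<equiv> R0 ** (T - T0)" and "Z1 \<equiv> transpose T0 ** (transpose \<xi> ** \<xi>) ** T0"
  shows "E + transpose E = - (transpose E ** E + transpose (mat 1 + E) ** ((s^2 - s0^2) *\<^sub>R Z1) ** (mat 1 + E))"
proof -
  let ?K = "transpose \<xi> ** \<xi>"
  define F where "F = mat 1 + E"
  have TF: "T = T0 ** F"
    by (simp add: F_def E_def matrix_add_ldistrib matrix_mul_assoc r mm_diff_right)
  have g: "transpose T ** T + (s^2) *\<^sub>R (transpose T ** ?K ** T) = mat 1"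
    unfolding T_def by (rule Tm_gram)
  have g0: "transpose T0 ** T0 + (s0^2) *\<^sub>R Z1 = mat 1"
    unfolding T0_def Z1_def by (rule Tm_gram)
  have "transpose T ** T + (s^2) *\<^sub>R (transpose T ** ?K ** T)
      = transpose F ** (transpose T0 ** T0 + (s^2) *\<^sub>R Z1) ** F"
    unfolding TF Z1_def by (simp add: matrix_transpose_mul matrix_mul_assoc mm_simps scaleR_add_right add.assoc)
  also have "transpose T0 ** T0 + (s^2) *\<^sub>R Z1 = mat 1 + (s^2 - s0^2) *\<^sub>R Z1"
    using g0 by (simp add: algebra_simps)
  finally have "transpose F ** (mat 1 + (s^2 - s0^2) *\<^sub>R Z1) ** F = mat 1" using g by simp
  then have "transpose F ** F + transpose F ** ((s^2 - s0^2) *\<^sub>R Z1) ** F = mat 1"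
    by (simp only: matrix_add_ldistrib matrix_add_rdistrib' matrix_mul_rid)
  moreover have "transpose F ** F = mat 1 + E + transpose E + transpose E ** E"
    unfolding F_def by (simp only: transpose_add transpose_mat matrix_add_ldistrib matrix_add_rdistrib' matrix_mul_rid matrix_mul_lid add.assoc add.left_commute)
  ultimately have "mat 1 + E + transpose E + transpose E ** E + transpose F ** ((s^2 - s0^2) *\<^sub>R Z1) ** F = mat 1"
    by simp
  then have "E + transpose E + (transpose E ** E + transpose F ** ((s^2 - s0^2) *\<^sub>R Z1) ** F) = 0"
    by (simp only: add.assoc) (metis add_left_imp_eq add.right_neutral)
  then show ?thesis unfolding F_def[symmetric] by (simp only: eq_neg_iff_add_eq_0)
qed

end

lemma mm_tendsto[tendsto_intros]:
  fixes f :: "'a \<Rightarrow> real^'n^'m" and g :: "'a \<Rightarrow> real^'k^'n"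
  shows "(f \<longlongrightarrow> a) F \<Longrightarrow> (g \<longlongrightarrow> b) F \<Longrightarrow> ((\<lambda>x. f x ** g x) \<longlongrightarrow> a ** b) F"
  by (rule bounded_bilinear.tendsto[OF mm_bb])

lemma tr_tendsto[tendsto_intros]:
  fixes f :: "'a \<Rightarrow> real^'n^'m"
  shows "(f \<longlongrightarrow> a) F \<Longrightarrow> ((\<lambda>x. transpose (f x)) \<longlongrightarrow> transpose a) F"
  by (rule bounded_linear.tendsto[OF transpose_bl])

definition Tp :: "real^('p::{finite,wellorder})^('m::finite) \<Rightarrow> real^('p::{finite,wellorder})^('m::finite) \<Rightarrow> real \<Rightarrow> real^('p::{finite,wellorder})^('p::{finite,wellorder})" where
  "Tp U \<xi> s = - (Tm U \<xi> s ** gam ((2 * s) *\<^sub>R (transpose (Tm U \<xi> s) ** (transpose \<xi> ** \<xi>) ** Tm U \<xi> s)))"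

lemma ut_diff: "upper_tri A \<Longrightarrow> upper_tri B \<Longrightarrow> upper_tri (A - B)"
  by (simp add: upper_tri_def)

context
  fixes U \<xi> :: "real^('p::{finite,wellorder})^('m::finite)"
  assumes U: "U \<in> stiefel" and xi: "\<xi> \<in> stiefel_tangent U"
begin

lemma Tm_deriv: "(Tm U \<xi> has_vector_derivative Tp U \<xi> s0) (at s0)"
proof -
  define T0 where "T0 = Tm U \<xi> s0"
  have p0: "upper_tri T0" "\<And>i. T0$i$i > 0" using Tm_prop[OF U xi, of s0] unfolding T0_def by auto
  obtain R0 where r0: "T0 ** R0 = mat 1" and r0': "R0 ** T0 = mat 1" and ur0: "upper_tri R0"
    using ut_inv[OF p0(1)] p0(2) by (metis less_irrefl)
  define Z1 where "Z1 = transpose T0 ** (transpose \<xi> ** \<xi>) ** T0"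
  define a where "a = - gam ((2 * s0) *\<^sub>R Z1)"
  define E where "E h = R0 ** (Tm U \<xi> (s0 + h) - T0)" for h
  define r where "r h = (2 * s0 + h) *\<^sub>R (transpose (mat 1 + E h) ** Z1 ** (mat 1 + E h)) - (2 * s0) *\<^sub>R Z1" for h
  define D where "D h = E h - h *\<^sub>R a" for h
  have vT: "Tp U \<xi> s0 = T0 ** a" unfolding Tp_def a_def T0_def Z1_def by (simp add: mm_uminus_right)
  have TE: "Tm U \<xi> (s0 + h) - T0 = T0 ** E h" for h
    unfolding E_def by (simp add: matrix_mul_assoc r0)
  have uE: "upper_tri (E h)" for h
    unfolding E_def by (intro ut_mult ur0 ut_diff) (use Tm_prop[OF U xi] p0 in auto)
  have Eeq: "E h = - gam (transpose (E h) ** E h + transpose (mat 1 + E h) ** (((s0+h)^2 - s0^2) *\<^sub>R Z1) ** (mat 1 + E h))" for h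
  proof -
    have "E h + transpose (E h) = - (transpose (E h) ** E h + transpose (mat 1 + E h) ** (((s0+h)^2 - s0^2) *\<^sub>R Z1) ** (mat 1 + E h))"
      unfolding E_def Z1_def T0_def by (rule E_eq[OF U xi]) (use r0 T0_def in simp)
    then show ?thesis using gam_upper[OF uE[of h]] gam_minus by metis
  qed
  have Deq: "D h = - gam (transpose (E h) ** D h + h *\<^sub>R (transpose (E h) ** a + r h))" for h
  proof -
    have sq: "(s0+h)^2 - s0^2 = h * (2 * s0 + h)" by (simp add: power2_eq_square algebra_simps)
    have "transpose (mat 1 + E h) ** (((s0+h)^2 - s0^2) *\<^sub>R Z1) ** (mat 1 + E h)
        = h *\<^sub>R ((2 * s0 + h) *\<^sub>R (transpose (mat 1 + E h) ** Z1 ** (mat 1 + E h)))"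
      unfolding sq by (simp add: mm_scaleR_left mm_scaleR_right)
    also have "\<dots> = h *\<^sub>R (r h + (2 * s0) *\<^sub>R Z1)" unfolding r_def by simp
    finally have 1: "transpose (mat 1 + E h) ** (((s0+h)^2 - s0^2) *\<^sub>R Z1) ** (mat 1 + E h) = h *\<^sub>R r h + h *\<^sub>R ((2 * s0) *\<^sub>R Z1)"
      by (simp add: scaleR_add_right)
    have 2: "transpose (E h) ** E h = transpose (E h) ** D h + h *\<^sub>R (transpose (E h) ** a)"
      unfolding D_def by (simp add: mm_diff_right mm_scaleR_right)
    have "D h = - gam (transpose (E h) ** E h + transpose (mat 1 + E h) ** (((s0+h)^2 - s0^2) *\<^sub>R Z1) ** (mat 1 + E h)) - h *\<^sub>R a"
      unfolding D_def by (simp only: Eeq[symmetric])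
    also have "\<dots> = - gam (transpose (E h) ** D h + h *\<^sub>R (transpose (E h) ** a) + (h *\<^sub>R r h + h *\<^sub>R ((2 * s0) *\<^sub>R Z1))) - h *\<^sub>R a"
      by (simp only: 1 2)
    also have "\<dots> = - gam (transpose (E h) ** D h + h *\<^sub>R (transpose (E h) ** a + r h))"
      unfolding a_def by (simp add: gam_add gam_scaleR gam_minus scaleR_add_right algebra_simps)
    finally show ?thesis .
  qed
  have Dbound: "norm (D h) \<le> norm (E h) * norm (D h) + \<bar>h\<bar> * (norm (E h) * norm a + norm (r h))" for h
  proof -
    have "norm (D h) \<le> norm (transpose (E h) ** D h + h *\<^sub>R (transpose (E h) ** a + r h))"
      using gam_norm by (subst Deq) (simp only: norm_minus_cancel)
    also have "\<dots> \<le> norm (transpose (E h) ** D h) + \<bar>h\<bar> * norm (transpose (E h) ** a + r h)"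
      by (rule order_trans[OF norm_triangle_ineq]) simp
    also have "\<dots> \<le> norm (E h) * norm (D h) + \<bar>h\<bar> * (norm (E h) * norm a + norm (r h))"
    proof -
      have n1: "norm (transpose (E h) ** D h) \<le> norm (E h) * norm (D h)"
        using norm_mm[of "transpose (E h)" "D h"] by (simp add: norm_transpose)
      have n2: "norm (transpose (E h) ** a + r h) \<le> norm (E h) * norm a + norm (r h)"
        using norm_mm[of "transpose (E h)" a] norm_triangle_ineq[of "transpose (E h) ** a" "r h"]
        by (simp add: norm_transpose)
      show ?thesis using n1 n2 by (intro add_mono mult_left_mono) auto
    qed
    finally show ?thesis .
  qed
  have contT: "isCont (Tm U \<xi>) s0"
    using Tm_cont[OF U xi] continuous_on_eq_continuous_at by blast
  have Tlim: "((\<lambda>h. Tm U \<xi> (s0 + h)) \<longlongrightarrow> T0) (at 0)"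
    unfolding T0_def
    by (rule isCont_tendsto_compose[OF contT]) (auto intro!: tendsto_eq_intros)
  have Elim: "(E \<longlongrightarrow> 0) (at 0)"
  proof -
    have "((\<lambda>h. R0 ** (Tm U \<xi> (s0 + h) - T0)) \<longlongrightarrow> R0 ** (T0 - T0)) (at 0)"
      by (intro tendsto_intros Tlim)
    then show ?thesis unfolding E_def by simp
  qed
  have rlim: "(r \<longlongrightarrow> 0) (at 0)"
  proof -
    have "(r \<longlongrightarrow> (2 * s0 + 0) *\<^sub>R (transpose (mat 1 + 0) ** Z1 ** (mat 1 + 0)) - (2 * s0) *\<^sub>R Z1) (at 0)"
      unfolding r_def by (intro tendsto_intros Elim)
    then show ?thesis by simp
  qed
  define g where "g h = 2 * norm T0 * (norm (E h) * norm a + norm (r h))" for h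
  have glim: "(g \<longlongrightarrow> 0) (at 0)"
  proof -
    have "(g \<longlongrightarrow> 2 * norm T0 * (0 * norm a + 0)) (at 0)"
      unfolding g_def by (intro tendsto_intros tendsto_norm_zero Elim rlim)
    then show ?thesis by simp
  qed
  have evE: "eventually (\<lambda>h. norm (E h) < 1/2) (at 0)"
    using Elim tendsto_norm_zero[OF Elim] order_tendstoD(2)[of "\<lambda>h. norm (E h)" 0 "at 0" "1/2"] by auto
  have ev: "eventually (\<lambda>h. norm (norm (Tm U \<xi> (s0 + h) - Tm U \<xi> s0 - h *\<^sub>R Tp U \<xi> s0) / norm h) \<le> g h) (at 0)"
    using evE
  proof (rule eventually_mono)
    fix h assume eh: "norm (E h) < 1/2"
    define X where "X = norm (E h) * norm a + norm (r h)"
    have X0: "X \<ge> 0" unfolding X_def by simp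
    have "norm (D h) \<le> norm (E h) * norm (D h) + \<bar>h\<bar> * X" using Dbound[of h] unfolding X_def .
    moreover have "norm (E h) * norm (D h) \<le> 1/2 * norm (D h)"
      using eh by (intro mult_right_mono) auto
    ultimately have nD: "norm (D h) \<le> 2 * (\<bar>h\<bar> * X)" by linarith
    have eqD: "Tm U \<xi> (s0 + h) - Tm U \<xi> s0 - h *\<^sub>R Tp U \<xi> s0 = T0 ** D h"
      unfolding vT D_def using TE[of h] by (simp add: T0_def mm_diff_right mm_scaleR_right)
    have "norm (Tm U \<xi> (s0 + h) - Tm U \<xi> s0 - h *\<^sub>R Tp U \<xi> s0) \<le> norm T0 * norm (D h)"
      unfolding eqD by (rule norm_mm)
    also have "\<dots> \<le> norm T0 * (2 * (\<bar>h\<bar> * X))" by (rule mult_left_mono[OF nD]) simp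
    also have "\<dots> = \<bar>h\<bar> * g h" unfolding g_def X_def by simp
    finally have bnd: "norm (Tm U \<xi> (s0 + h) - Tm U \<xi> s0 - h *\<^sub>R Tp U \<xi> s0) \<le> \<bar>h\<bar> * g h" .
    have g0: "g h \<ge> 0" unfolding g_def by simp
    show "norm (norm (Tm U \<xi> (s0 + h) - Tm U \<xi> s0 - h *\<^sub>R Tp U \<xi> s0) / norm h) \<le> g h"
    proof (cases "h = 0")
      case True then show ?thesis using g0 by simp
    next
      case False then show ?thesis using bnd by (simp add: divide_le_eq mult.commute)
    qed
  qed
  have "((\<lambda>h. norm (Tm U \<xi> (s0 + h) - Tm U \<xi> s0 - h *\<^sub>R Tp U \<xi> s0) / norm h) \<longlongrightarrow> 0) (at 0)"
    by (rule Lim_null_comparison[OF ev glim])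
  then show ?thesis
    unfolding has_vector_derivative_def has_derivative_at
    by (simp add: bounded_linear_scaleR_left)
qed

end

definition LB :: "(real \<Rightarrow> 'a::real_normed_vector) \<Rightarrow> real \<Rightarrow> real \<Rightarrow> bool" where
  "LB f M L \<longleftrightarrow> (\<forall>t\<in>{0..1}. norm (f t) \<le> M \<and> norm (f t - f 0) \<le> L * t)"

lemma LB_mono: assumes "LB f M L" "M \<le> M'" "L \<le> L'" shows "LB f M' L'"
  using assms
proof (unfold LB_def, intro ballI conjI)
  fix t :: real assume a: "\<forall>t\<in>{0..1}. norm (f t) \<le> M \<and> norm (f t - f 0) \<le> L * t" "M \<le> M'" "L \<le> L'" and t: "t \<in> {0..1}"
  then show "norm (f t) \<le> M'" using order_trans by fastforce
  have "L * t \<le> L' * t" using a t by (intro mult_right_mono) auto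
  then show "norm (f t - f 0) \<le> L' * t" using a t order_trans by fastforce
qed

lemma LB_const: "LB (\<lambda>s. C) (norm C) 0"
  by (simp add: LB_def)

lemma LB_id: "LB (\<lambda>s::real. s) 1 1"
  by (auto simp: LB_def)

lemma LB_M0: "LB f M L \<Longrightarrow> 0 \<le> M"
proof -
  assume "LB f M L"
  then have "norm (f 0) \<le> M" unfolding LB_def by auto
  then show ?thesis using norm_ge_zero order_trans by blast
qed

lemma LB_add: "LB f M1 L1 \<Longrightarrow> LB g M2 L2 \<Longrightarrow> LB (\<lambda>s. f s + g s) (M1 + M2) (L1 + L2)"
  unfolding LB_def
proof (intro ballI conjI)
  fix t :: real assume f: "\<forall>t\<in>{0..1}. norm (f t) \<le> M1 \<and> norm (f t - f 0) \<le> L1 * t"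
    and g: "\<forall>t\<in>{0..1}. norm (g t) \<le> M2 \<and> norm (g t - g 0) \<le> L2 * t" and t: "t \<in> {0..1}"
  show "norm (f t + g t) \<le> M1 + M2" using f g t norm_triangle_ineq[of "f t" "g t"] by fastforce
  have "norm (f t + g t - (f 0 + g 0)) \<le> norm (f t - f 0) + norm (g t - g 0)"
    using norm_triangle_ineq[of "f t - f 0" "g t - g 0"] by (simp add: algebra_simps)
  moreover have "norm (f t - f 0) \<le> L1 * t" "norm (g t - g 0) \<le> L2 * t" using f g t by auto
  ultimately show "norm (f t + g t - (f 0 + g 0)) \<le> (L1 + L2) * t" by (simp add: distrib_right)
qed

lemma LB_neg: assumes "LB f M L" shows "LB (\<lambda>s. - f s) M L"
proof -
  have "norm (- f t - - f 0) = norm (f t - f 0)" for t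
    using norm_minus_commute[of "f 0" "f t"] by simp
  then show ?thesis using assms unfolding LB_def by simp
qed

lemma LB_bilinear:
  assumes bb: "\<And>a b. norm (h a b) \<le> norm a * norm b"
    and bl: "bounded_bilinear h"
    and f: "LB f M1 L1" and g: "LB g M2 L2"
  shows "LB (\<lambda>s. h (f s) (g s)) (M1 * M2) (L1 * M2 + M1 * L2)"
  unfolding LB_def
proof (intro ballI conjI)
  fix t :: real assume t: "t \<in> {0..1}"
  have t0: "(0::real) \<in> {0..1}" by simp
  have f1: "norm (f t) \<le> M1" "norm (f t - f 0) \<le> L1 * t" "norm (f 0) \<le> M1"
    using f t t0 unfolding LB_def by auto
  have g1: "norm (g t) \<le> M2" "norm (g t - g 0) \<le> L2 * t"
    using g t unfolding LB_def by auto
  have M10: "0 \<le> M1" "0 \<le> M2" using LB_M0 f g by auto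
  have "norm (f t) * norm (g t) \<le> M1 * M2" by (rule mult_mono) (use f1 g1 M10 in auto)
  then show "norm (h (f t) (g t)) \<le> M1 * M2" using bb[of "f t" "g t"] by linarith
  have "h (f t) (g t) - h (f 0) (g 0) = h (f t - f 0) (g t) + h (f 0) (g t - g 0)"
    by (simp add: bounded_bilinear.diff_left[OF bl] bounded_bilinear.diff_right[OF bl])
  then have "norm (h (f t) (g t) - h (f 0) (g 0)) \<le> norm (f t - f 0) * norm (g t) + norm (f 0) * norm (g t - g 0)"
    using norm_triangle_ineq[of "h (f t - f 0) (g t)" "h (f 0) (g t - g 0)"] bb[of "f t - f 0" "g t"] bb[of "f 0" "g t - g 0"] by simp
  also have "\<dots> \<le> (L1 * t) * M2 + M1 * (L2 * t)"
    using f1 g1 M10 order_trans[OF norm_ge_zero f1(2)] by (intro add_mono mult_mono) auto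
  also have "\<dots> = (L1 * M2 + M1 * L2) * t" by (simp add: algebra_simps)
  finally show "norm (h (f t) (g t) - h (f 0) (g 0)) \<le> (L1 * M2 + M1 * L2) * t" .
qed

lemma LB_mm: "LB f M1 L1 \<Longrightarrow> LB g M2 L2 \<Longrightarrow> LB (\<lambda>s. f s ** g s) (M1 * M2) (L1 * M2 + M1 * L2)"
  for f :: "real \<Rightarrow> real^'n^'m" and g :: "real \<Rightarrow> real^'k^'n"
  by (rule LB_bilinear[OF norm_mm mm_bb])

lemma LB_scaleR: "LB f M1 L1 \<Longrightarrow> LB g M2 L2 \<Longrightarrow> LB (\<lambda>s. f s *\<^sub>R g s) (M1 * M2) (L1 * M2 + M1 * L2)"
  for f :: "real \<Rightarrow> real" and g :: "real \<Rightarrow> 'a::real_normed_vector"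
  by (rule LB_bilinear[OF _ bounded_bilinear_scaleR]) simp

lemma LB_lin:
  assumes bl: "bounded_linear h" and nb: "\<And>x. norm (h x) \<le> C * norm x" and C: "C \<ge> 0" and f: "LB f M L"
  shows "LB (\<lambda>s. h (f s)) (C * M) (C * L)"
  unfolding LB_def
proof (intro ballI conjI)
  fix t :: real assume t: "t \<in> {0..1}"
  have f1: "norm (f t) \<le> M" "norm (f t - f 0) \<le> L * t" using f t unfolding LB_def by auto
  show "norm (h (f t)) \<le> C * M" using nb[of "f t"] f1 C mult_left_mono[of "norm (f t)" M C] by fastforce
  have "norm (h (f t) - h (f 0)) = norm (h (f t - f 0))" by (simp add: linear_diff[OF bounded_linear.linear[OF bl]])
  also have "\<dots> \<le> C * (L * t)" using nb[of "f t - f 0"] f1 C mult_left_mono[of "norm (f t - f 0)" "L * t" C] by fastforce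
  finally show "norm (h (f t) - h (f 0)) \<le> C * L * t" by simp
qed

lemma LB_transpose: fixes f :: "real \<Rightarrow> real^'n^'m" assumes "LB f M L" shows "LB (\<lambda>s. transpose (f s)) M L"
  using LB_lin[OF transpose_bl _ _ assms, of 1] by (simp add: norm_transpose)

lemma LB_gam: assumes "LB f M L" shows "LB (\<lambda>s. gam (f s)) M L"
proof -
  have "\<And>x. norm (gam x) \<le> 1 * norm x" using gam_norm by simp
  from LB_lin[OF gam_bl this _ assms] show ?thesis by simp
qed

lemma trace_norm: "\<bar>trace (X::real^'n^'n)\<bar> \<le> sqrt (real CARD('n)) * norm X"
proof -
  have "trace X = mat 1 \<bullet> X" by (simp add: inner_mat)
  then have "\<bar>trace X\<bar> \<le> norm (mat 1 :: real^'n^'n) * norm X" by (simp add: Cauchy_Schwarz_ineq2)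
  moreover have "norm (mat 1 :: real^'n^'n) = sqrt (real CARD('n))"
    by (simp add: norm_eq_sqrt_inner inner_mat trace_I)
  ultimately show ?thesis by simp
qed

lemma LB_trace: "LB f M L \<Longrightarrow> LB (\<lambda>s. trace (f s)) (sqrt (real CARD('n)) * M) (sqrt (real CARD('n)) * L)"
  for f :: "real \<Rightarrow> real^'n^'n"
  by (rule LB_lin[OF trace_bl]) (use trace_norm in auto)

definition Qm :: "real^('p::{finite,wellorder})^('m::finite) \<Rightarrow> real^('p::{finite,wellorder})^('m::finite) \<Rightarrow> real \<Rightarrow> real^('p::{finite,wellorder})^('m::finite)" where
  "Qm U \<xi> s = (U + s *\<^sub>R \<xi>) ** Tm U \<xi> s"

definition Qp :: "real^('p::{finite,wellorder})^('m::finite) \<Rightarrow> real^('p::{finite,wellorder})^('m::finite) \<Rightarrow> real \<Rightarrow> real^('p::{finite,wellorder})^('m::finite)" where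
  "Qp U \<xi> s = \<xi> ** Tm U \<xi> s + (U + s *\<^sub>R \<xi>) ** Tp U \<xi> s"

context
  fixes U \<xi> :: "real^('p::{finite,wellorder})^('m::finite)"
  assumes U: "U \<in> stiefel" and xi: "\<xi> \<in> stiefel_tangent U" and nxi: "norm \<xi> \<le> 1"
begin

lemma Qm_deriv: "(Qm U \<xi> has_vector_derivative Qp U \<xi> s) (at s)"
proof -
  have b: "((\<lambda>s. U + s *\<^sub>R \<xi>) has_vector_derivative \<xi>) (at s)"
    by (auto intro!: derivative_eq_intros)
  show ?thesis
    using bounded_bilinear.has_vector_derivative[OF mm_bb b Tm_deriv[OF U xi, of s]]
    unfolding Qm_def Qp_def by (simp add: add.commute)
qed

lemma Qm_norm: "norm (Qm U \<xi> s) = sqrt (real CARD('p))"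
proof -
  have "norm (Qm U \<xi> s) ^ 2 = real CARD('p)"
    using Tm_prop[OF U xi, of s] by (simp add: norm_sq_trace Qm_def trace_I)
  then show ?thesis by (metis norm_ge_zero real_sqrt_unique)
qed

lemma xiT_bounds:
  shows "norm (\<xi> ** Tm U \<xi> s) \<le> sqrt (real CARD('p))"
    and "\<bar>s\<bar> * norm (\<xi> ** Tm U \<xi> s) \<le> sqrt (real CARD('p))"
proof -
  have "norm (\<xi> ** Tm U \<xi> s) \<le> norm \<xi> * norm (Tm U \<xi> s)" by (rule norm_mm)
  also have "\<dots> \<le> 1 * sqrt (real CARD('p))"
    using nxi Tm_bound[OF U xi, of s] by (intro mult_mono) auto
  finally show "norm (\<xi> ** Tm U \<xi> s) \<le> sqrt (real CARD('p))" by simp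
  have "s^2 * norm (\<xi> ** Tm U \<xi> s) ^ 2 \<le> real CARD('p)"
    using Tm_norm[OF U xi, of s] zero_le_power2[of "norm (Tm U \<xi> s)"] by linarith
  then have "(\<bar>s\<bar> * norm (\<xi> ** Tm U \<xi> s))^2 \<le> real CARD('p)"
    by (simp add: power_mult_distrib)
  then show "\<bar>s\<bar> * norm (\<xi> ** Tm U \<xi> s) \<le> sqrt (real CARD('p))"
    by (simp add: real_le_rsqrt)
qed

lemma gam_part_bound:
  "norm (gam ((2 * s) *\<^sub>R (transpose (Tm U \<xi> s) ** (transpose \<xi> ** \<xi>) ** Tm U \<xi> s))) \<le> 2 * real CARD('p)"
proof -
  let ?X = "\<xi> ** Tm U \<xi> s"
  have eq: "transpose (Tm U \<xi> s) ** (transpose \<xi> ** \<xi>) ** Tm U \<xi> s = transpose ?X ** ?X"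
    by (simp add: matrix_transpose_mul matrix_mul_assoc)
  have "norm (gam ((2 * s) *\<^sub>R (transpose ?X ** ?X))) \<le> norm ((2 * s) *\<^sub>R (transpose ?X ** ?X))"
    by (rule gam_norm)
  also have "\<dots> \<le> 2 * \<bar>s\<bar> * (norm ?X * norm ?X)"
    using norm_mm[of "transpose ?X" ?X] by (simp add: norm_transpose abs_mult mult_left_mono)
  also have "\<dots> = 2 * ((\<bar>s\<bar> * norm ?X) * norm ?X)" by simp
  also have "\<dots> \<le> 2 * (sqrt (real CARD('p)) * sqrt (real CARD('p)))"
    using xiT_bounds[of s] by (intro mult_left_mono mult_mono) auto
  also have "\<dots> = 2 * real CARD('p)" by simp
  finally show ?thesis unfolding eq .
qed

lemma Tp_bound: "norm (Tp U \<xi> s) \<le> 2 * sqrt (real CARD('p)) ^ 3"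
proof -
  have "norm (Tp U \<xi> s) \<le> norm (Tm U \<xi> s) * (2 * real CARD('p))"
    unfolding Tp_def norm_minus_cancel
    by (rule order_trans[OF norm_mm]) (intro mult_left_mono gam_part_bound norm_ge_zero)
  also have "\<dots> \<le> sqrt (real CARD('p)) * (2 * real CARD('p))"
    using Tm_bound[OF U xi, of s] by (intro mult_right_mono) auto
  also have "\<dots> = 2 * sqrt (real CARD('p)) ^ 3"
    by (simp add: power3_eq_cube)
  finally show ?thesis .
qed

lemma Qp_bound: "norm (Qp U \<xi> s) \<le> 3 * sqrt (real CARD('p)) ^ 3"
proof -
  let ?r = "sqrt (real CARD('p))"
  have r1: "?r \<ge> 1" by simp
  have eq: "(U + s *\<^sub>R \<xi>) ** Tp U \<xi> s = - (Qm U \<xi> s ** gam ((2 * s) *\<^sub>R (transpose (Tm U \<xi> s) ** (transpose \<xi> ** \<xi>) ** Tm U \<xi> s)))"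
    unfolding Tp_def Qm_def by (simp add: mm_uminus_right matrix_mul_assoc)
  have "norm ((U + s *\<^sub>R \<xi>) ** Tp U \<xi> s) \<le> norm (Qm U \<xi> s) * (2 * real CARD('p))"
    unfolding eq norm_minus_cancel
    by (rule order_trans[OF norm_mm]) (intro mult_left_mono gam_part_bound norm_ge_zero)
  also have "\<dots> = ?r * (2 * real CARD('p))" by (simp add: Qm_norm)
  also have "\<dots> = 2 * ?r ^ 3" by (simp add: power3_eq_cube)
  finally have 1: "norm ((U + s *\<^sub>R \<xi>) ** Tp U \<xi> s) \<le> 2 * ?r ^ 3" .
  have 2: "norm (\<xi> ** Tm U \<xi> s) \<le> ?r ^ 3"
  proof -
    have "?r ^ 1 \<le> ?r ^ 3" by (rule power_increasing) (use r1 in auto)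
    then show ?thesis using xiT_bounds(1)[of s] by simp
  qed
  show ?thesis unfolding Qp_def using norm_triangle_ineq[of "\<xi> ** Tm U \<xi> s" "(U + s *\<^sub>R \<xi>) ** Tp U \<xi> s"] 1 2 by linarith
qed

lemma Tm_LB: "LB (Tm U \<xi>) (sqrt (real CARD('p))) (2 * sqrt (real CARD('p)) ^ 3)"
  unfolding LB_def
proof (intro ballI conjI)
  fix t :: real assume t: "t \<in> {0..1}"
  show "norm (Tm U \<xi> t) \<le> sqrt (real CARD('p))" by (rule Tm_bound[OF U xi])
  have "norm (Tm U \<xi> t - Tm U \<xi> 0) \<le> (2 * sqrt (real CARD('p)) ^ 3) * norm (t - 0)"
  proof (rule differentiable_bound[where S="{0..1}" and f'="\<lambda>s h. h *\<^sub>R Tp U \<xi> s"])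
    show "convex {0..1::real}" by simp
    fix x assume "x \<in> {0..1::real}"
    show "(Tm U \<xi> has_derivative (\<lambda>h. h *\<^sub>R Tp U \<xi> x)) (at x within {0..1})"
      using Tm_deriv[OF U xi, of x] has_vector_derivative_at_within unfolding has_vector_derivative_def by blast
    show "onorm (\<lambda>h. h *\<^sub>R Tp U \<xi> x) \<le> 2 * sqrt (real CARD('p)) ^ 3"
      by (rule onorm_le) (use Tp_bound[of x] in \<open>simp add: mult.commute mult_left_mono\<close>)
  qed (use t in auto)
  then show "norm (Tm U \<xi> t - Tm U \<xi> 0) \<le> 2 * sqrt (real CARD('p)) ^ 3 * t" using t by simp
qed

lemma B_LB: "LB (\<lambda>s. U + s *\<^sub>R \<xi>) (sqrt (real CARD('p)) + 1) 1"
  unfolding LB_def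
proof (intro ballI conjI)
  fix t :: real assume t: "t \<in> {0..1}"
  have "norm U ^ 2 = real CARD('p)"
    using U unfolding stiefel_def by (simp add: norm_sq_trace trace_I)
  then have nU: "norm U = sqrt (real CARD('p))" by (simp add: real_sqrt_unique)
  have "norm (U + t *\<^sub>R \<xi>) \<le> norm U + \<bar>t\<bar> * norm \<xi>" using norm_triangle_ineq[of U "t *\<^sub>R \<xi>"] by simp
  also have "\<dots> \<le> sqrt (real CARD('p)) + 1" using t nxi nU mult_mono[of "\<bar>t\<bar>" 1 "norm \<xi>" 1] by auto
  finally show "norm (U + t *\<^sub>R \<xi>) \<le> sqrt (real CARD('p)) + 1" .
  show "norm (U + t *\<^sub>R \<xi> - (U + 0 *\<^sub>R \<xi>)) \<le> 1 * t" using t nxi mult_left_mono[of "norm \<xi>" 1 t] by auto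
qed

end

definition LBU :: "('x \<Rightarrow> bool) \<Rightarrow> ('x \<Rightarrow> real \<Rightarrow> 'a::real_normed_vector) \<Rightarrow> bool" where
  "LBU P f \<longleftrightarrow> (\<exists>M L. \<forall>x. P x \<longrightarrow> LB (f x) M L)"

lemma LBU_mm: "LBU P f \<Longrightarrow> LBU P g \<Longrightarrow> LBU P (\<lambda>x s. f x s ** g x s)"
  for f :: "'x \<Rightarrow> real \<Rightarrow> real^'n^'m" and g :: "'x \<Rightarrow> real \<Rightarrow> real^'k^'n"
  unfolding LBU_def using LB_mm by blast

lemma LBU_scaleR: "LBU P f \<Longrightarrow> LBU P g \<Longrightarrow> LBU P (\<lambda>x s. f x s *\<^sub>R g x s)"
  for f :: "'x \<Rightarrow> real \<Rightarrow> real" and g :: "'x \<Rightarrow> real \<Rightarrow> 'a::real_normed_vector"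
  unfolding LBU_def using LB_scaleR by blast

lemma LBU_add: "LBU P f \<Longrightarrow> LBU P g \<Longrightarrow> LBU P (\<lambda>x s. f x s + g x s)"
  unfolding LBU_def using LB_add by blast

lemma LBU_neg: "LBU P f \<Longrightarrow> LBU P (\<lambda>x s. - f x s)"
  unfolding LBU_def using LB_neg by blast

lemma LBU_transpose: "LBU P f \<Longrightarrow> LBU P (\<lambda>x s. transpose (f x s))"
  for f :: "'x \<Rightarrow> real \<Rightarrow> real^'n^'m"
  unfolding LBU_def using LB_transpose by blast

lemma LBU_gam: "LBU P f \<Longrightarrow> LBU P (\<lambda>x s. gam (f x s))"
  unfolding LBU_def using LB_gam by blast

lemma LBU_trace: "LBU P f \<Longrightarrow> LBU P (\<lambda>x s. trace (f x s))"
  for f :: "'x \<Rightarrow> real \<Rightarrow> real^'n^'n"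
  unfolding LBU_def using LB_trace by blast

lemma LBU_const: assumes "\<And>x. P x \<Longrightarrow> norm (C x) \<le> M" shows "LBU P (\<lambda>x s. C x)"
  unfolding LBU_def using LB_mono[OF LB_const] assms by blast

lemma LBU_2s: "LBU P (\<lambda>x s. 2 * s)"
  unfolding LBU_def LB_def by (rule exI[of _ 2], rule exI[of _ 2]) auto

lemma LBU_side:
  fixes pU pxi :: "'x \<Rightarrow> real^('p::{finite,wellorder})^('m::finite)"
  assumes P: "\<And>x. P x \<Longrightarrow> pU x \<in> stiefel \<and> pxi x \<in> stiefel_tangent (pU x) \<and> norm (pxi x) \<le> 1"
  shows "LBU P (\<lambda>x s. Qm (pU x) (pxi x) s)" "LBU P (\<lambda>x s. Qp (pU x) (pxi x) s)"
proof -
  have T: "LBU P (\<lambda>x s. Tm (pU x) (pxi x) s)"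
    unfolding LBU_def using Tm_LB P by blast
  have B: "LBU P (\<lambda>x s. pU x + s *\<^sub>R pxi x)"
    unfolding LBU_def using B_LB P by blast
  have X: "LBU P (\<lambda>x s. pxi x)" by (rule LBU_const[where M=1]) (use P in auto)
  have Tp: "LBU P (\<lambda>x s. Tp (pU x) (pxi x) s)"
    unfolding Tp_def
    by (intro LBU_neg LBU_mm T LBU_gam LBU_scaleR LBU_2s LBU_transpose X)
  show "LBU P (\<lambda>x s. Qm (pU x) (pxi x) s)"
    unfolding Qm_def by (intro LBU_mm B T)
  show "LBU P (\<lambda>x s. Qp (pU x) (pxi x) s)"
    unfolding Qp_def by (intro LBU_add LBU_mm B T Tp X)
qed

lemma pull_deriv:
  fixes A :: "real^('n::finite)^('m::finite)" and N :: "real^('p::{finite,wellorder})^('p::{finite,wellorder})"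
    and U \<xi> :: "real^('p::{finite,wellorder})^('m::finite)" and V \<eta> :: "real^('p::{finite,wellorder})^('n::finite)"
  assumes U: "U \<in> stiefel" and xi: "\<xi> \<in> stiefel_tangent U" and nxi: "norm \<xi> \<le> 1"
    and V: "V \<in> stiefel" and eta: "\<eta> \<in> stiefel_tangent V" and neta: "norm \<eta> \<le> 1"
  shows "(pullback_ray A N U V \<xi> \<eta> has_real_derivative
     (trace (transpose (Qp U \<xi> s) ** A ** Qm V \<eta> s ** N) + trace (transpose (Qm U \<xi> s) ** A ** Qp V \<eta> s ** N))) (at s)"
proof -
  have eq: "pullback_ray A N U V \<xi> \<eta> = (\<lambda>s. trace (transpose (Qm U \<xi> s) ** A ** Qm V \<eta> s ** N))"
    by (simp add: fun_eq_iff pullback_ray_def costF_def Qm_def qf_ray[OF U xi] qf_ray[OF V eta])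
  have dQ: "(Qm U \<xi> has_vector_derivative Qp U \<xi> s) (at s)" by (rule Qm_deriv[OF U xi nxi])
  have dP: "(Qm V \<eta> has_vector_derivative Qp V \<eta> s) (at s)" by (rule Qm_deriv[OF V eta neta])
  have d1: "((\<lambda>s. transpose (Qm U \<xi> s)) has_vector_derivative transpose (Qp U \<xi> s)) (at s)"
    by (rule bounded_linear.has_vector_derivative[OF transpose_bl dQ])
  have d2: "((\<lambda>s. transpose (Qm U \<xi> s) ** A) has_vector_derivative (transpose (Qm U \<xi> s) ** 0 + transpose (Qp U \<xi> s) ** A)) (at s)"
    by (rule bounded_bilinear.has_vector_derivative[OF mm_bb d1 has_vector_derivative_const])
  have d3: "((\<lambda>s. transpose (Qm U \<xi> s) ** A ** Qm V \<eta> s) has_vector_derivative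
       (transpose (Qm U \<xi> s) ** A ** Qp V \<eta> s + (transpose (Qm U \<xi> s) ** 0 + transpose (Qp U \<xi> s) ** A) ** Qm V \<eta> s)) (at s)"
    by (rule bounded_bilinear.has_vector_derivative[OF mm_bb d2 dP])
  have d4: "((\<lambda>s. transpose (Qm U \<xi> s) ** A ** Qm V \<eta> s ** N) has_vector_derivative
       (transpose (Qm U \<xi> s) ** A ** Qm V \<eta> s ** 0 + (transpose (Qm U \<xi> s) ** A ** Qp V \<eta> s + (transpose (Qm U \<xi> s) ** 0 + transpose (Qp U \<xi> s) ** A) ** Qm V \<eta> s) ** N)) (at s)"
    by (rule bounded_bilinear.has_vector_derivative[OF mm_bb d3 has_vector_derivative_const])
  have d5: "((\<lambda>s. trace (transpose (Qm U \<xi> s) ** A ** Qm V \<eta> s ** N)) has_vector_derivative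
       trace (transpose (Qm U \<xi> s) ** A ** Qm V \<eta> s ** 0 + (transpose (Qm U \<xi> s) ** A ** Qp V \<eta> s + (transpose (Qm U \<xi> s) ** 0 + transpose (Qp U \<xi> s) ** A) ** Qm V \<eta> s) ** N)) (at s)"
    by (rule bounded_linear.has_vector_derivative[OF trace_bl d4])
  have "trace (transpose (Qm U \<xi> s) ** A ** Qm V \<eta> s ** 0 + (transpose (Qm U \<xi> s) ** A ** Qp V \<eta> s + (transpose (Qm U \<xi> s) ** 0 + transpose (Qp U \<xi> s) ** A) ** Qm V \<eta> s) ** N)
      = trace (transpose (Qp U \<xi> s) ** A ** Qm V \<eta> s ** N) + trace (transpose (Qm U \<xi> s) ** A ** Qp V \<eta> s ** N)"
    by (simp add: matrix_add_rdistrib' trace_add)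
  then show ?thesis using d5 unfolding eq has_real_derivative_iff_has_vector_derivative by simp
qed

lemma norm4: "norm (transpose X ** A ** Y ** N) \<le> norm X * norm A * norm Y * norm N"
  for X :: "real^'p^'m" and A :: "real^'n^'m" and Y :: "real^'p^'n" and N :: "real^'p^'p"
proof -
  have "norm (transpose X ** A ** Y ** N) \<le> norm (transpose X ** A ** Y) * norm N" by (rule norm_mm)
  also have "\<dots> \<le> (norm (transpose X ** A) * norm Y) * norm N" by (intro mult_right_mono norm_mm) auto
  also have "\<dots> \<le> ((norm X * norm A) * norm Y) * norm N"
    using norm_mm[of "transpose X" A] by (intro mult_right_mono) (auto simp: norm_transpose)
  finally show ?thesis .
qed

theorem mainTheorem7:
  fixes A :: "real^('n::finite)^('m::finite)"
    and \<mu> :: "('p::{finite,wellorder}) \<Rightarrow> real"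
  assumes "CARD('n) \<le> CARD('m)" and "CARD('p) \<le> CARD('n)"
    and "\<forall>i j. i < j \<longrightarrow> \<mu> i > \<mu> j"
    and "\<forall>i. \<mu> i > 0"
  shows "\<exists>L>0. \<forall>(U::real^('p::{finite,wellorder})^('m::finite)) (V::real^('p::{finite,wellorder})^('n::finite)) \<xi> \<eta> (t::real).
           U \<in> stiefel \<and> V \<in> stiefel \<and> \<xi> \<in> stiefel_tangent U \<and> \<eta> \<in> stiefel_tangent V \<and>
           sqrt (prod_metric \<xi> \<eta> \<xi> \<eta>) = 1 \<and> t \<ge> 0 \<longrightarrow>
           (\<exists>D0 Dt. (pullback_ray A (diagm \<mu>) U V \<xi> \<eta> has_real_derivative D0) (at 0) \<and>
                    (pullback_ray A (diagm \<mu>) U V \<xi> \<eta> has_real_derivative Dt) (at t) \<and>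
                    \<bar>Dt - D0\<bar> \<le> L * t)"
proof -
  let ?N = "diagm \<mu>"
  let ?r = "sqrt (real CARD('p))"
  define P where "P = (\<lambda>x::(real^('p::{finite,wellorder})^('m::finite)) \<times> (real^('p::{finite,wellorder})^('m::finite)) \<times> (real^('p::{finite,wellorder})^('n::finite)) \<times> (real^('p::{finite,wellorder})^('n::finite)).
     fst x \<in> stiefel \<and> fst (snd x) \<in> stiefel_tangent (fst x) \<and> norm (fst (snd x)) \<le> 1 \<and>
     fst (snd (snd x)) \<in> stiefel \<and> snd (snd (snd x)) \<in> stiefel_tangent (fst (snd (snd x))) \<and> norm (snd (snd (snd x))) \<le> 1)"
  define Dv where "Dv x s = trace (transpose (Qp (fst x) (fst (snd x)) s) ** A ** Qm (fst (snd (snd x))) (snd (snd (snd x))) s ** ?N)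
      + trace (transpose (Qm (fst x) (fst (snd x)) s) ** A ** Qp (fst (snd (snd x))) (snd (snd (snd x))) s ** ?N)" for x s
  have s1: "LBU P (\<lambda>x s. Qm (fst x) (fst (snd x)) s)" "LBU P (\<lambda>x s. Qp (fst x) (fst (snd x)) s)"
    by (rule LBU_side[where pU=fst and pxi="\<lambda>x. fst (snd x)"], simp add: P_def)+
  have s2: "LBU P (\<lambda>x s. Qm (fst (snd (snd x))) (snd (snd (snd x))) s)" "LBU P (\<lambda>x s. Qp (fst (snd (snd x))) (snd (snd (snd x))) s)"
    by (rule LBU_side[where pU="\<lambda>x. fst (snd (snd x))" and pxi="\<lambda>x. snd (snd (snd x))"], simp add: P_def)+
  have cA: "LBU P (\<lambda>x s. A)" by (rule LBU_const[where M="norm A"]) simp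
  have cN: "LBU P (\<lambda>x s. ?N)" by (rule LBU_const[where M="norm ?N"]) simp
  have "LBU P Dv"
    unfolding Dv_def by (intro LBU_add LBU_trace LBU_mm LBU_transpose s1 s2 cA cN)
  then obtain M L where LBx: "\<And>x. P x \<Longrightarrow> LB (Dv x) M L" unfolding LBU_def by blast
  define Cg where "Cg = 2 * (?r * (3 * ?r ^ 3 * norm A * ?r * norm ?N))"
  have Dbound: "\<bar>Dv x s\<bar> \<le> Cg" if Px: "P x" for x s
  proof -
    obtain U \<xi> V \<eta> where x: "x = (U, \<xi>, V, \<eta>)" by (metis prod.collapse)
    have c: "U \<in> stiefel" "\<xi> \<in> stiefel_tangent U" "norm \<xi> \<le> 1" "V \<in> stiefel" "\<eta> \<in> stiefel_tangent V" "norm \<eta> \<le> 1"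
      using Px unfolding P_def x by auto
    have b1: "\<bar>trace (transpose (Qp U \<xi> s) ** A ** Qm V \<eta> s ** ?N)\<bar> \<le> ?r * (3 * ?r ^ 3 * norm A * ?r * norm ?N)"
    proof -
      have "\<bar>trace (transpose (Qp U \<xi> s) ** A ** Qm V \<eta> s ** ?N)\<bar> \<le> ?r * norm (transpose (Qp U \<xi> s) ** A ** Qm V \<eta> s ** ?N)"
        by (rule trace_norm)
      also have "\<dots> \<le> ?r * (norm (Qp U \<xi> s) * norm A * norm (Qm V \<eta> s) * norm ?N)"
        by (intro mult_left_mono norm4) auto
      also have "\<dots> = ?r * (norm (Qp U \<xi> s) * (norm A * ?r * norm ?N))"
        using Qm_norm[OF c(4-6), of s] by (simp add: algebra_simps)
      also have "\<dots> \<le> ?r * (3 * ?r ^ 3 * (norm A * ?r * norm ?N))"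
        using Qp_bound[OF c(1-3), of s]
        by (intro mult_left_mono mult_right_mono) auto
      also have "\<dots> = ?r * (3 * ?r ^ 3 * norm A * ?r * norm ?N)" by (simp add: algebra_simps)
      finally show ?thesis .
    qed
    have b2: "\<bar>trace (transpose (Qm U \<xi> s) ** A ** Qp V \<eta> s ** ?N)\<bar> \<le> ?r * (3 * ?r ^ 3 * norm A * ?r * norm ?N)"
    proof -
      have "\<bar>trace (transpose (Qm U \<xi> s) ** A ** Qp V \<eta> s ** ?N)\<bar> \<le> ?r * norm (transpose (Qm U \<xi> s) ** A ** Qp V \<eta> s ** ?N)"
        by (rule trace_norm)
      also have "\<dots> \<le> ?r * (norm (Qm U \<xi> s) * norm A * norm (Qp V \<eta> s) * norm ?N)"
        by (intro mult_left_mono norm4) auto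
      also have "\<dots> = ?r * (?r * norm A * norm (Qp V \<eta> s) * norm ?N)"
        using Qm_norm[OF c(1-3), of s] by simp
      also have "\<dots> \<le> ?r * (?r * norm A * (3 * ?r ^ 3) * norm ?N)"
        using Qp_bound[OF c(4-6), of s]
        by (intro mult_left_mono mult_right_mono) auto
      also have "\<dots> = ?r * (3 * ?r ^ 3 * norm A * ?r * norm ?N)" by (simp add: algebra_simps)
      finally show ?thesis .
    qed
    show ?thesis unfolding Dv_def x Cg_def using b1 b2 by simp
  qed
  have Cg0: "Cg \<ge> 0" unfolding Cg_def by simp
  define L' where "L' = max L 0 + 2 * Cg + 1"
  show ?thesis
  proof (rule exI[of _ L'], intro conjI allI impI)
    show "L' > 0" unfolding L'_def using Cg0 by simp
    fix U :: "real^('p::{finite,wellorder})^('m::finite)" and V :: "real^('p::{finite,wellorder})^('n::finite)"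
      and \<xi> \<eta> and t :: real
    assume h: "U \<in> stiefel \<and> V \<in> stiefel \<and> \<xi> \<in> stiefel_tangent U \<and> \<eta> \<in> stiefel_tangent V \<and>
           sqrt (prod_metric \<xi> \<eta> \<xi> \<eta>) = 1 \<and> t \<ge> 0"
    have pm: "prod_metric \<xi> \<eta> \<xi> \<eta> = norm \<xi> ^ 2 + norm \<eta> ^ 2"
      by (simp add: prod_metric_def norm_sq_trace)
    then have "norm \<xi> ^ 2 + norm \<eta> ^ 2 = 1" using h by simp
    then have "norm \<xi> ^ 2 \<le> 1" "norm \<eta> ^ 2 \<le> 1"
      using zero_le_power2[of "norm \<xi>"] zero_le_power2[of "norm \<eta>"] by linarith+
    then have nx: "norm \<xi> \<le> 1" and ne: "norm \<eta> \<le> 1" by (simp_all add: power_le_one_iff abs_le_iff)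
    let ?x = "(U, \<xi>, V, \<eta>)"
    have Px: "P ?x" unfolding P_def using h nx ne by simp
    have d: "(pullback_ray A ?N U V \<xi> \<eta> has_real_derivative Dv ?x s) (at s)" for s
      unfolding Dv_def using pull_deriv[of U \<xi> V \<eta> A ?N s] h nx ne by simp
    have "\<bar>Dv ?x t - Dv ?x 0\<bar> \<le> L' * t"
    proof (cases "t \<le> 1")
      case True
      then have "norm (Dv ?x t - Dv ?x 0) \<le> L * t" using LBx[OF Px] h unfolding LB_def by auto
      moreover have "L * t \<le> L' * t" unfolding L'_def using h Cg0 by (intro mult_right_mono) auto
      ultimately show ?thesis by simp
    next
      case False
      have "\<bar>Dv ?x t - Dv ?x 0\<bar> \<le> \<bar>Dv ?x t\<bar> + \<bar>Dv ?x 0\<bar>" by linarith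
      also have "\<dots> \<le> 2 * Cg" using Dbound[OF Px, of t] Dbound[OF Px, of 0] by linarith
      also have "\<dots> \<le> 2 * Cg * t" using False Cg0 by (simp add: mult_le_cancel_left1)
      also have "\<dots> \<le> L' * t" unfolding L'_def using False by (intro mult_right_mono) auto
      finally show ?thesis .
    qed
    then show "\<exists>D0 Dt. (pullback_ray A ?N U V \<xi> \<eta> has_real_derivative D0) (at 0) \<and>
                    (pullback_ray A ?N U V \<xi> \<eta> has_real_derivative Dt) (at t) \<and> \<bar>Dt - D0\<bar> \<le> L' * t"
      using d by blast
  qed
qed

end
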